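(* There exist a positive function $x\in M_{1,\infty}$ and a dilation invariant generalised limit $\omega$ on $L_\infty(0,\infty)$ (so that $\tau_\omega$ is a Dixmier trace on $M_{1,\infty}$) such that $$\tau_\omega(x)\neq\omega\Big(t\mapsto\frac{-1}{\log(t)}\int_{1/t}^\infty\lambda\,dn_x(\lambda)\Big).$$
   Context: For a bounded measurable $x$ on $(0,\infty)$, $n_x(\lambda)=m(\{s:|x(s)|>\lambda\})$ ($m$ Lebesgue measure) and $x^*$ is the right-continuous nonincreasing rearrangement of $|x|$; the Stieltjes integral $-\int_z^\infty\lambda\,dn_x(\lambda)$ equals $\int_0^{n_x(z)}x^*(s)ds$. $M_{1,\infty}$ is the space of bounded measurable $x$ on $(0,\infty)$ with $\sup_{t\ge e}\frac1{\log t}\int_0^tx^*(s)ds<\infty$. A generalised limit on $L_\infty(0,\infty)$ is a positive linear functional $\omega$ with $\omega(1)=1$ and $\omega(y)=0$ whenever $y(t)\to0$ as $t\to\infty$; it is dilation invariant if $\omega(\sigma_ny)=\omega(y)$ for all $n\in\mathbb{N}$, where $(\sigma_ny)(t)=y(t/n)$. For such $\omega$, $\tau_\omega(x)=\omega(t\mapsto\frac1{\log t}\int_0^tx^*(s)ds)$ for $0\le x\in M_{1,\infty}$ is additive (a Dixmier trace). Functions of $t$ to which $\omega$ is applied are considered for large $t$; their values on a bounded initial interval do not affect $\omega$. *)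

theory Defs
  imports "HOL-Analysis.Analysis"
begin

definition distrib_fun :: "(real \<Rightarrow> real) \<Rightarrow> real \<Rightarrow> ennreal" where
  "distrib_fun x l = emeasure lborel {s \<in> {0<..}. \<bar>x s\<bar> > l}"

text \<open>Right-continuous nonincreasing rearrangement x* of |x|.\<close>
definition rearr :: "(real \<Rightarrow> real) \<Rightarrow> real \<Rightarrow> real" where
  "rearr x t = Inf {l::real. 0 \<le> l \<and> distrib_fun x l \<le> ennreal t}"

definition bdd_meas :: "(real \<Rightarrow> real) set" where
  "bdd_meas = {x. x \<in> borel_measurable (restrict_space lborel {0<..})
                 \<and> (\<exists>C. \<forall>s>0. \<bar>x s\<bar> \<le> C)}"

definition M1inf :: "(real \<Rightarrow> real) set" where
  "M1inf = {x. x \<in> bdd_meas \<and>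
     (\<exists>C. \<forall>t\<ge>exp 1. (LBINT s=0..t. rearr x s) / ln t \<le> C)}"

text \<open>L_infinity(0,infinity), via representatives (values at t \<le> 0 are irrelevant).\<close>
definition Linf :: "(real \<Rightarrow> real) set" where
  "Linf = {f. f \<in> borel_measurable (restrict_space lborel {0<..})
              \<and> (\<exists>C. AE t in lborel. t > 0 \<longrightarrow> \<bar>f t\<bar> \<le> C)}"

definition generalised_limit :: "((real \<Rightarrow> real) \<Rightarrow> real) \<Rightarrow> bool" where
  "generalised_limit \<omega> \<longleftrightarrow>
     \<omega> (\<lambda>_. 1) = 1
   \<and> (\<forall>f\<in>Linf. \<forall>g\<in>Linf. \<omega> (\<lambda>t. f t + g t) = \<omega> f + \<omega> g)
   \<and> (\<forall>f\<in>Linf. \<forall>c::real. \<omega> (\<lambda>t. c * f t) = c * \<omega> f)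
   \<and> (\<forall>f\<in>Linf. (AE t in lborel. t > 0 \<longrightarrow> 0 \<le> f t) \<longrightarrow> 0 \<le> \<omega> f)
   \<and> (\<forall>f\<in>Linf. (f \<longlongrightarrow> 0) at_top \<longrightarrow> \<omega> f = 0)"

definition dilation_invariant :: "((real \<Rightarrow> real) \<Rightarrow> real) \<Rightarrow> bool" where
  "dilation_invariant \<omega> \<longleftrightarrow>
     (\<forall>f\<in>Linf. \<forall>n::nat. n \<ge> 1 \<longrightarrow> \<omega> (\<lambda>t. f (t / real n)) = \<omega> f)"

definition dix_fun :: "(real \<Rightarrow> real) \<Rightarrow> real \<Rightarrow> real" where
  "dix_fun x t = (if t \<ge> exp 1 then (LBINT s=0..t. rearr x s) / ln t else 0)"

definition dixmier_trace :: "((real \<Rightarrow> real) \<Rightarrow> real) \<Rightarrow> (real \<Rightarrow> real) \<Rightarrow> real" where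
  "dixmier_trace \<omega> x = \<omega> (dix_fun x)"

text \<open>t \<mapsto> (-1/log t) int_{1/t}^infinity lambda dn_x(lambda)
  = (1/log t) int_0^{n_x(1/t)} x*(s) ds, cut off for t < e.\<close>
definition stieltjes_fun :: "(real \<Rightarrow> real) \<Rightarrow> real \<Rightarrow> real" where
  "stieltjes_fun x t = (if t \<ge> exp 1
      then (LBINT s=0..enn2real (distrib_fun x (1/t)). rearr x s) / ln t else 0)"

end

theory Submission
  imports Defs "HOL-Real_Asymp.Real_Asymp"
begin


definition ufam :: "nat set set set" where
  "ufam = {E. (\<forall>S\<in>E. \<forall>T\<in>E. S \<inter> T \<in> E) \<and> (\<forall>S\<in>E. \<forall>T. S \<subseteq> T \<longrightarrow> T \<in> E)
        \<and> {} \<notin> E \<and> (\<forall>n. {n..} \<in> E)}"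

lemma ufam_chain_bound:
  assumes C: "C \<in> chains ufam"
  shows "\<exists>U\<in>ufam. \<forall>X\<in>C. X \<subseteq> U"
proof -
  define E0 :: "nat set set" where "E0 = {S. \<exists>n. {n..} \<subseteq> S}"
  define U where "U = E0 \<union> \<Union>C"
  have Cs: "C \<subseteq> ufam" using C by (rule chainsD2)
  have E0sub: "E0 \<subseteq> X" if "X \<in> C" for X
  proof
    fix S assume "S \<in> E0"
    then obtain n where "{n..} \<subseteq> S" by (auto simp: E0_def)
    moreover have "{n..} \<in> X" "\<forall>T. {n..} \<subseteq> T \<longrightarrow> T \<in> X" using Cs that by (auto simp: ufam_def)
    ultimately show "S \<in> X" by blast
  qed
  have "U \<in> ufam"
    unfolding ufam_def
  proof (intro CollectI conjI ballI allI impI)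
    fix S T assume S: "S \<in> U" and T: "T \<in> U"
    show "S \<inter> T \<in> U"
    proof (cases "C = {}")
      case True
      then have "S \<in> E0" "T \<in> E0" using S T by (auto simp: U_def)
      then obtain n m where "{n..} \<subseteq> S" "{m..} \<subseteq> T" by (auto simp: E0_def)
      then have "{max n m..} \<subseteq> S \<inter> T" by auto
      then show ?thesis by (auto simp: U_def E0_def)
    next
      case False
      then obtain X0 where X0: "X0 \<in> C" by auto
      have "\<exists>X\<in>C. S \<in> X" using S X0 E0sub by (auto simp: U_def)
      then obtain X where X: "X \<in> C" "S \<in> X" by auto
      have "\<exists>Y\<in>C. T \<in> Y" using T X0 E0sub by (auto simp: U_def)
      then obtain Y where Y: "Y \<in> C" "T \<in> Y" by auto
      have "X \<subseteq> Y \<or> Y \<subseteq> X" using chainsD[OF C X(1) Y(1)] .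
      then show ?thesis
      proof
        assume "X \<subseteq> Y"
        have "Y \<in> ufam" using Cs Y by auto
        then have "S \<inter> T \<in> Y" using X Y \<open>X \<subseteq> Y\<close> unfolding ufam_def by blast
        then show ?thesis using Y by (auto simp: U_def)
      next
        assume "Y \<subseteq> X"
        have "X \<in> ufam" using Cs X by auto
        then have "S \<inter> T \<in> X" using X Y \<open>Y \<subseteq> X\<close> unfolding ufam_def by blast
        then show ?thesis using X by (auto simp: U_def)
      qed
    qed
  next
    fix S T assume "S \<in> U" "S \<subseteq> T"
    then show "T \<in> U"
    proof (cases "S \<in> E0")
      case True
      then show ?thesis using \<open>S \<subseteq> T\<close> by (auto simp: U_def E0_def)
    next
      case False
      then obtain X where "X \<in> C" "S \<in> X" using \<open>S \<in> U\<close> by (auto simp: U_def)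
      then have "T \<in> X" using Cs \<open>S \<subseteq> T\<close> unfolding ufam_def by blast
      then show ?thesis using \<open>X \<in> C\<close> by (auto simp: U_def)
    qed
  next
    show "{} \<notin> U" using Cs by (auto simp: U_def E0_def ufam_def)
  next
    fix n show "{n..} \<in> U" by (auto simp: U_def E0_def)
  qed
  moreover have "\<forall>X\<in>C. X \<subseteq> U" by (auto simp: U_def)
  ultimately show ?thesis by blast
qed

lemma ufam_max_ultra:
  assumes M: "M \<in> ufam" and max: "\<forall>X\<in>ufam. M \<subseteq> X \<longrightarrow> X = M"
  shows "S \<in> M \<or> - S \<in> M"
proof (rule ccontr)
  assume nS: "\<not> (S \<in> M \<or> - S \<in> M)"
  have disj: "R \<inter> S \<noteq> {}" if "R \<in> M" for R
  proof
    assume "R \<inter> S = {}"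
    then have "R \<subseteq> - S" by auto
    then show False using nS that M by (auto simp: ufam_def)
  qed
  define M' where "M' = {T. \<exists>R\<in>M. R \<inter> S \<subseteq> T}"
  have "M' \<in> ufam"
    unfolding ufam_def
  proof (intro CollectI conjI ballI allI impI)
    fix T1 T2 assume "T1 \<in> M'" "T2 \<in> M'"
    then obtain R1 R2 where "R1 \<in> M" "R2 \<in> M" "R1 \<inter> S \<subseteq> T1" "R2 \<inter> S \<subseteq> T2" by (auto simp: M'_def)
    moreover have "R1 \<inter> R2 \<in> M" using M \<open>R1 \<in> M\<close> \<open>R2 \<in> M\<close> by (auto simp: ufam_def)
    ultimately show "T1 \<inter> T2 \<in> M'" unfolding M'_def by blast
  next
    fix T1 T2 assume "T1 \<in> M'" "T1 \<subseteq> T2" then show "T2 \<in> M'" by (auto simp: M'_def)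
  next
    show "{} \<notin> M'" using disj by (auto simp: M'_def)
  next
    fix n show "{n..} \<in> M'" using M by (auto simp: M'_def ufam_def)
  qed
  moreover have "M \<subseteq> M'" by (auto simp: M'_def)
  ultimately have "M' = M" using max by blast
  moreover have "S \<in> M'"
  proof -
    have "{0..} \<in> M" using M unfolding ufam_def by blast
    then show ?thesis unfolding M'_def by blast
  qed
  ultimately show False using nS by simp
qed

lemma ultrafilter_nat_exists:
  "\<exists>U::nat filter. U \<noteq> bot \<and> U \<le> sequentially \<and> (\<forall>P. eventually P U \<or> eventually (\<lambda>k. \<not> P k) U)"
proof -
  obtain M where M: "M \<in> ufam" and max: "\<forall>X\<in>ufam. M \<subseteq> X \<longrightarrow> X = M"
  proof -
    have "\<forall>C\<in>chains ufam. \<exists>U\<in>ufam. \<forall>X\<in>C. X \<subseteq> U" using ufam_chain_bound by blast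
    from Zorn_Lemma2[OF this] show ?thesis using that by blast
  qed
  have isf: "is_filter (\<lambda>P. {k. P k} \<in> M)"
    unfolding is_filter_def
  proof (intro conjI allI impI)
    have "{0..} \<in> M" using M unfolding ufam_def by blast
    then show "{k. True} \<in> M" by (simp add: atLeast_0)
  next
    fix P Q assume "{k. P k} \<in> M" "{k. Q k} \<in> M"
    then have "{k. P k} \<inter> {k. Q k} \<in> M" using M by (auto simp: ufam_def)
    then show "{k. P k \<and> Q k} \<in> M" by (simp add: Collect_conj_eq)
  next
    fix P Q assume "\<forall>x. P x \<longrightarrow> Q x" "{k. P k} \<in> M"
    then have "{k. P k} \<subseteq> {k. Q k}" "{k. P k} \<in> M" by auto
    then show "{k. Q k} \<in> M" using M unfolding ufam_def by (metis (no_types, lifting) mem_Collect_eq)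
  qed
  define U where "U = Abs_filter (\<lambda>P. {k. P k} \<in> M)"
  have ev: "eventually P U \<longleftrightarrow> {k. P k} \<in> M" for P
    unfolding U_def by (rule eventually_Abs_filter[OF isf])
  have "U \<noteq> bot"
    using M by (simp add: trivial_limit_def ev ufam_def)
  moreover have "U \<le> sequentially"
    unfolding le_filter_def eventually_sequentially
  proof (intro allI impI)
    fix P :: "nat \<Rightarrow> bool" assume "\<exists>N. \<forall>n\<ge>N. P n"
    then obtain N where "\<forall>n\<ge>N. P n" by auto
    then have "{N..} \<subseteq> {k. P k}" by auto
    moreover have "{N..} \<in> M" using M by (auto simp: ufam_def)
    ultimately show "eventually P U" using M unfolding ev ufam_def by blast
  qed
  moreover have "eventually P U \<or> eventually (\<lambda>k. \<not> P k) U" for P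
    using ufam_max_ultra[OF M max, of "{k. P k}"] by (simp add: ev Collect_neg_eq)
  ultimately show ?thesis by blast
qed

lemma ultra_bounded_tendsto:
  fixes U :: "nat filter" and b :: "nat \<Rightarrow> real"
  assumes U: "U \<noteq> bot" "\<forall>P. eventually P U \<or> eventually (\<lambda>k. \<not> P k) U"
    and bd: "\<And>k. \<bar>b k\<bar> \<le> B"
  shows "\<exists>L. (b \<longlongrightarrow> L) U"
proof -
  define S where "S = {c. eventually (\<lambda>k. b k \<le> c) U}"
  have "B \<in> S" using bd by (auto simp: S_def abs_le_iff)
  then have ne: "S \<noteq> {}" by auto
  have lb: "-B \<le> c" if "c \<in> S" for c
  proof (rule ccontr)
    assume "\<not> - B \<le> c"
    then have "eventually (\<lambda>k. False) U"
    proof -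
      have "eventually (\<lambda>k. b k \<le> c) U" using that by (simp add: S_def)
      then show ?thesis
      proof (rule eventually_mono)
        fix k assume "b k \<le> c" then show False using bd[of k] \<open>\<not> - B \<le> c\<close> by linarith
      qed
    qed
    then show False using U(1) by (simp add: trivial_limit_def)
  qed
  have bdd: "bdd_below S" unfolding bdd_below_def using lb by blast
  define L where "L = Inf S"
  have "(b \<longlongrightarrow> L) U"
  proof (rule order_tendstoI)
    fix a assume "a < L"
    show "eventually (\<lambda>k. a < b k) U"
    proof (rule ccontr)
      assume "\<not> eventually (\<lambda>k. a < b k) U"
      then have "eventually (\<lambda>k. \<not> a < b k) U" using U(2) by blast
      then have "a \<in> S" unfolding S_def by (auto elim: eventually_mono)
      then have "L \<le> a" unfolding L_def using bdd by (rule cInf_lower)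
      then show False using \<open>a < L\<close> by simp
    qed
  next
    fix a assume "L < a"
    then obtain c where "c \<in> S" "c < a" unfolding L_def using ne by (meson cInf_lessD)
    then show "eventually (\<lambda>k. b k < a) U" unfolding S_def by (auto elim: eventually_mono)
  qed
  then show ?thesis by blast
qed



lemma Linf_bound:
  assumes "f \<in> Linf"
  obtains C where "C \<ge> 0" "AE t in lborel. t > 0 \<longrightarrow> \<bar>f t\<bar> \<le> C"
proof -
  obtain C where "AE t in lborel. t > 0 \<longrightarrow> \<bar>f t\<bar> \<le> C" using assms by (auto simp: Linf_def)
  moreover have "AE t in lborel. t > 0 \<longrightarrow> \<bar>f t\<bar> \<le> max C 0"
    using calculation by (auto elim!: eventually_mono)
  ultimately show ?thesis using that[of "max C 0"] by auto
qed

lemma Linf_meas: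
  assumes "f \<in> Linf"
  shows "(\<lambda>x. indicator {0<..} x * f x) \<in> borel_measurable lborel"
proof -
  have "f \<in> borel_measurable (restrict_space lborel {0<..})" using assms by (auto simp: Linf_def)
  then have "(\<lambda>x. indicator {0<..} x *\<^sub>R f x) \<in> borel_measurable lborel"
    by (subst borel_measurable_restrict_space_iff[symmetric]) auto
  then show ?thesis by simp
qed

lemma win_integrable:
  assumes "f \<in> Linf" "0 < p"
  shows "set_integrable lborel {p<..q} (\<lambda>s. f s / s)"
proof -
  obtain C where C: "C \<ge> 0" "AE t in lborel. t > 0 \<longrightarrow> \<bar>f t\<bar> \<le> C" using Linf_bound[OF assms(1)] by blast
  have m: "(\<lambda>x. indicator {0<..} x * f x) \<in> borel_measurable lborel" using Linf_meas[OF assms(1)] .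
  have eq: "(\<lambda>s. indicator {p<..q} s *\<^sub>R (f s / s)) = (\<lambda>s. indicator {p<..q} s * ((indicator {0<..} s * f s) / s))"
    using assms(2) by (auto simp: indicator_def fun_eq_iff)
  have "integrable lborel (\<lambda>s. indicator {p<..q} s * (C / p))"
  proof (intro integrable_mult_left)
    have "emeasure lborel {p<..q} < \<infinity>" by (cases "p \<le> q") (simp_all add: emeasure_lborel_Ioc)
    then show "integrable lborel (indicat_real {p<..q})" by (simp add: integrable_indicator_iff)
  qed
  note int1 = this
  have meas: "(\<lambda>s. indicator {p<..q} s * ((indicator {0<..} s * f s) / s)) \<in> borel_measurable lborel"
    using m by measurable
  have ae: "AE s in lborel. norm (indicator {p<..q} s * ((indicator {0<..} s * f s) / s)) \<le> norm (indicator {p<..q} s * (C / p))"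
    using C(2)
  proof (rule eventually_mono)
    fix s assume h: "s > 0 \<longrightarrow> \<bar>f s\<bar> \<le> C"
    show "norm (indicator {p<..q} s * ((indicator {0<..} s * f s) / s)) \<le> norm (indicator {p<..q} s * (C / p))"
    proof (cases "s \<in> {p<..q}")
      case True
      then have "s > 0" "p < s" using assms(2) by auto
      then have "\<bar>f s\<bar> / s \<le> C / p"
        using h C(1) assms(2) by (meson frac_le less_imp_le)
      then show ?thesis using True \<open>s > 0\<close> C(1) assms(2) by (simp add: abs_divide)
    qed simp
  qed
  have "integrable lborel (\<lambda>s. indicator {p<..q} s * ((indicator {0<..} s * f s) / s))"
    by (rule Bochner_Integration.integrable_bound[OF int1 meas ae])
  then show ?thesis unfolding set_integrable_def eq .
qed

lemma inv_integral:
  fixes p q :: real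
  assumes "0 < p" "p \<le> q"
  shows "(LINT s:{p<..q}|lborel. 1 / s) = ln q - ln p"
proof -
  have "(LBINT s=ereal p..ereal q. 1 / s) = ln q - ln p"
  proof (rule interval_integral_FTC_finite)
    show "continuous_on {min p q..max p q} (\<lambda>s. 1 / s)"
      using assms by (intro continuous_intros) auto
    fix x assume "min p q \<le> x" "x \<le> max p q"
    then have "x > 0" using assms by auto
    then show "(ln has_vector_derivative 1 / x) (at x within {min p q..max p q})"
      by (auto intro!: derivative_eq_intros simp: has_real_derivative_iff_has_vector_derivative[symmetric])
  qed
  moreover have "(LBINT s=ereal p..ereal q. 1 / s) = (LINT s:{p<..q}|lborel. 1 / s)"
    by (rule interval_integral_Ioc) (use assms in simp)
  ultimately show ?thesis by simp
qed

lemma inv_set_integrable: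
  fixes p q :: real
  assumes "0 < p"
  shows "set_integrable lborel {p<..q} (\<lambda>s. 1 / s)"
proof -
  have "(\<lambda>_::real. 1::real) \<in> Linf" by (auto simp: Linf_def)
  from win_integrable[OF this assms, of q] show ?thesis by simp
qed

lemma win_bound:
  fixes p q C :: real and f :: "real \<Rightarrow> real"
  assumes int: "set_integrable lborel {p<..q} f" and "0 < p" "p \<le> q"
    and bd: "AE s in lborel. s \<in> {p<..q} \<longrightarrow> \<bar>f s\<bar> \<le> C / s"
  shows "\<bar>LINT s:{p<..q}|lborel. f s\<bar> \<le> C * (ln q - ln p)"
proof -
  have i1: "set_integrable lborel {p<..q} (\<lambda>s. C * (1 / s))"
    using inv_set_integrable[OF assms(2), of q] by (rule set_integrable_mult_right)
  have "(LINT s:{p<..q}|lborel. f s) \<le> (LINT s:{p<..q}|lborel. C * (1 / s))"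
    using int i1 by (rule set_integral_mono_AE) (use bd in \<open>auto elim!: eventually_mono\<close>)
  moreover have "- (LINT s:{p<..q}|lborel. f s) \<le> (LINT s:{p<..q}|lborel. C * (1 / s))"
  proof -
    have "(LINT s:{p<..q}|lborel. - f s) \<le> (LINT s:{p<..q}|lborel. C * (1 / s))"
      using set_integrable_mult_right[where a="-1", OF int] i1
      by (intro set_integral_mono_AE) (use bd in \<open>auto elim!: eventually_mono\<close>)
    moreover have "(LINT s:{p<..q}|lborel. - f s) = - (LINT s:{p<..q}|lborel. f s)"
      using set_integral_mult_right[where a="-1" and M=lborel and A="{p<..q}" and f=f] by simp
    ultimately show ?thesis by simp
  qed
  moreover have "(LINT s:{p<..q}|lborel. C * (1 / s)) = C * (ln q - ln p)"
  proof -
    have "(LINT s:{p<..q}|lborel. C * (1 / s)) = C * (LINT s:{p<..q}|lborel. 1 / s)"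
      by (rule set_integral_mult_right)
    then show ?thesis using inv_integral[OF assms(2,3)] by simp
  qed
  ultimately show ?thesis by linarith
qed

lemma win_add:
  assumes "f \<in> Linf" "0 < x" "x \<le> y" "y \<le> z"
  shows "(LINT s:{x<..y}|lborel. f s / s) + (LINT s:{y<..z}|lborel. f s / s) = (LINT s:{x<..z}|lborel. f s / s)"
proof -
  have "{x<..z} = {x<..y} \<union> {y<..z}" using assms by auto
  moreover have "{x<..y} \<inter> {y<..z} = {}" by auto
  ultimately show ?thesis
    using win_integrable[OF assms(1,2), of y] win_integrable[OF assms(1), of y z] assms
    by (simp add: set_integral_Un)
qed

lemma win_dilate:
  fixes c p q :: real and f :: "real \<Rightarrow> real"
  assumes "c > 0"
  shows "(LINT s:{p<..q}|lborel. f (s / c) / s) = (LINT s:{p/c<..q/c}|lborel. f s / s)"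
proof -
  have "(LINT s:{p<..q}|lborel. f (s / c) / s) = \<bar>c\<bar> *\<^sub>R (LINT x|lborel. indicator {p<..q} (0 + c * x) *\<^sub>R (f ((0 + c * x) / c) / (0 + c * x)))"
    unfolding set_lebesgue_integral_def
    by (rule lborel_integral_real_affine) (use assms in simp)
  also have "\<dots> = c * (LINT x|lborel. indicator {p<..q} (c * x) *\<^sub>R (f x / (c * x)))"
    using assms by simp
  also have "\<dots> = (LINT x|lborel. c * (indicator {p<..q} (c * x) *\<^sub>R (f x / (c * x))))"
    by (rule integral_mult_right_zero[symmetric])
  also have "\<dots> = (LINT x|lborel. indicator {p/c<..q/c} x *\<^sub>R (f x / x))"
  proof (rule Bochner_Integration.integral_cong[OF refl])
    fix x
    have "(c * x \<in> {p<..q}) = (x \<in> {p/c<..q/c})"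
      using assms by (auto simp: field_simps)
    then show "c * (indicator {p<..q} (c * x) *\<^sub>R (f x / (c * x))) = indicator {p/c<..q/c} x *\<^sub>R (f x / x)"
      using assms by (auto simp: indicator_def)
  qed
  finally show ?thesis unfolding set_lebesgue_integral_def .
qed

lemma win_bound_Linf:
  fixes x y C :: real
  assumes "f \<in> Linf" "AE t in lborel. t > 0 \<longrightarrow> \<bar>f t\<bar> \<le> C" "0 < x" "x \<le> y"
  shows "\<bar>LINT s:{x<..y}|lborel. f s / s\<bar> \<le> C * (ln y - ln x)"
proof (rule win_bound[OF win_integrable[OF assms(1,3)] assms(3,4)])
  show "AE s in lborel. s \<in> {x<..y} \<longrightarrow> \<bar>f s / s\<bar> \<le> C / s"
    using assms(2)
  proof (rule eventually_mono)
    fix s assume h: "0 < s \<longrightarrow> \<bar>f s\<bar> \<le> C"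
    show "s \<in> {x<..y} \<longrightarrow> \<bar>f s / s\<bar> \<le> C / s"
    proof
      assume "s \<in> {x<..y}"
      then have "s > 0" using assms(3) by auto
      then show "\<bar>f s / s\<bar> \<le> C / s" using h by (simp add: abs_divide divide_right_mono)
    qed
  qed
qed



definition Bw :: "(nat \<Rightarrow> real) \<Rightarrow> (nat \<Rightarrow> real) \<Rightarrow> nat \<Rightarrow> (real \<Rightarrow> real) \<Rightarrow> real" where
  "Bw a b k f = (LINT s:{a k<..b k}|lborel. f s / s) / (ln (b k) - ln (a k))"

lemma omega_exists:
  fixes a b :: "nat \<Rightarrow> real"
  assumes pos: "\<And>k. 0 < a k" and ab: "\<And>k. a k < b k"
    and ainf: "filterlim a at_top sequentially"
    and Linf': "filterlim (\<lambda>k. ln (b k) - ln (a k)) at_top sequentially"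
  shows "\<exists>\<omega>. generalised_limit \<omega> \<and> dilation_invariant \<omega> \<and>
     (\<forall>f\<in>Linf. \<forall>g\<in>Linf. \<forall>d>0. (\<forall>k. Bw a b k f + d \<le> Bw a b k g) \<longrightarrow> \<omega> f + d \<le> \<omega> g)"
proof -
  obtain U :: "nat filter" where U: "U \<noteq> bot" "U \<le> sequentially"
    "\<forall>P. eventually P U \<or> eventually (\<lambda>k. \<not> P k) U"
    using ultrafilter_nat_exists by blast
  define B where "B = Bw a b"
  define \<omega> where "\<omega> f = Lim U (\<lambda>k. B k f)" for f
  have L: "ln (b k) - ln (a k) > 0" for k using pos ab by (smt (verit) ln_less_cancel_iff)
  have ntriv: "\<not> trivial_limit U" using U(1) by simp
  have lim_eq: "Lim U g = l" if gl: "(g \<longlongrightarrow> l) U" for g l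
    using tendsto_Lim[OF ntriv gl] .
  have bw_bound: "\<bar>B k f\<bar> \<le> C" if bw: "AE s in lborel. s \<in> {a k<..b k} \<longrightarrow> \<bar>f s\<bar> \<le> C"
     "set_integrable lborel {a k<..b k} (\<lambda>s. f s / s)" for k f C
  proof -
    have "AE s in lborel. s \<in> {a k<..b k} \<longrightarrow> \<bar>f s / s\<bar> \<le> C / s"
      using bw(1)
    proof (rule eventually_mono)
      fix s assume h: "s \<in> {a k<..b k} \<longrightarrow> \<bar>f s\<bar> \<le> C"
      show "s \<in> {a k<..b k} \<longrightarrow> \<bar>f s / s\<bar> \<le> C / s"
      proof
        assume "s \<in> {a k<..b k}"
        then have "s > 0" using pos[of k] by auto
        then show "\<bar>f s / s\<bar> \<le> C / s" using h \<open>s \<in> _\<close> by (simp add: abs_divide divide_right_mono)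
      qed
    qed
    from win_bound[OF bw(2) pos[of k] less_imp_le[OF ab[of k]] this]
    have "\<bar>LINT s:{a k<..b k}|lborel. f s / s\<bar> \<le> C * (ln (b k) - ln (a k))" .
    then show ?thesis using L[of k] by (simp add: B_def Bw_def abs_divide pos_divide_le_eq)
  qed
  have bdd: "\<exists>C. \<forall>k. \<bar>B k f\<bar> \<le> C" if fL: "f \<in> Linf" for f
  proof -
    obtain C where C: "C \<ge> 0" "AE t in lborel. t > 0 \<longrightarrow> \<bar>f t\<bar> \<le> C" using Linf_bound[OF fL] by blast
    have "\<bar>B k f\<bar> \<le> C" for k
    proof (rule bw_bound)
      show "AE s in lborel. s \<in> {a k<..b k} \<longrightarrow> \<bar>f s\<bar> \<le> C"
        using C(2) by (rule eventually_mono) (use pos[of k] in auto)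
      show "set_integrable lborel {a k<..b k} (\<lambda>s. f s / s)" using win_integrable[OF fL pos] .
    qed
    then show ?thesis by blast
  qed
  have tend: "((\<lambda>k. B k f) \<longlongrightarrow> \<omega> f) U" if fL: "f \<in> Linf" for f
  proof -
    obtain C where C: "\<And>k. \<bar>B k f\<bar> \<le> C" using bdd[OF fL] by blast
    obtain l where l: "((\<lambda>k. B k f) \<longlongrightarrow> l) U" using ultra_bounded_tendsto[OF U(1) U(3), of "\<lambda>k. B k f" C] C by blast
    then show ?thesis using lim_eq[OF l] by (simp add: \<omega>_def)
  qed
  have seqU: "(g \<longlongrightarrow> l) U" if gl: "(g \<longlongrightarrow> l) sequentially" for g :: "nat \<Rightarrow> real" and l
    using tendsto_mono[OF U(2) gl] .
  have one: "\<omega> (\<lambda>_. 1) = 1"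
  proof -
    have "B k (\<lambda>_. 1) = 1" for k
      using inv_integral[OF pos[of k] less_imp_le[OF ab[of k]]] L[of k] by (simp add: B_def Bw_def)
    then show ?thesis unfolding \<omega>_def by (simp add: lim_eq)
  qed
  have add: "\<omega> (\<lambda>t. f t + g t) = \<omega> f + \<omega> g" if fg: "f \<in> Linf" "g \<in> Linf" for f g
  proof -
    have "B k (\<lambda>t. f t + g t) = B k f + B k g" for k
    proof -
      have "(LINT s:{a k<..b k}|lborel. (f s + g s) / s) = (LINT s:{a k<..b k}|lborel. f s / s + g s / s)"
        by (simp add: add_divide_distrib)
      also have "\<dots> = (LINT s:{a k<..b k}|lborel. f s / s) + (LINT s:{a k<..b k}|lborel. g s / s)"
        by (rule set_integral_add) (use win_integrable[OF fg(1) pos] win_integrable[OF fg(2) pos] in auto)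
      finally show ?thesis by (simp add: B_def Bw_def add_divide_distrib)
    qed
    then have "((\<lambda>k. B k (\<lambda>t. f t + g t)) \<longlongrightarrow> \<omega> f + \<omega> g) U"
      using tendsto_add[OF tend[OF fg(1)] tend[OF fg(2)]] by simp
    then show ?thesis unfolding \<omega>_def by (rule lim_eq)
  qed
  have scal: "\<omega> (\<lambda>t. c * f t) = c * \<omega> f" if fL: "f \<in> Linf" for f c
  proof -
    have "B k (\<lambda>t. c * f t) = c * B k f" for k
    proof -
      have "(LINT s:{a k<..b k}|lborel. (c * f s) / s) = (LINT s:{a k<..b k}|lborel. c * (f s / s))"
        by simp
      also have "\<dots> = c * (LINT s:{a k<..b k}|lborel. f s / s)"
        by (rule set_integral_mult_right)
      finally show ?thesis by (simp add: B_def Bw_def)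
    qed
    then have "((\<lambda>k. B k (\<lambda>t. c * f t)) \<longlongrightarrow> c * \<omega> f) U"
      using tendsto_mult_left[OF tend[OF fL]] by simp
    then show ?thesis unfolding \<omega>_def by (rule lim_eq)
  qed
  have posi: "0 \<le> \<omega> f" if fP: "f \<in> Linf" "AE t in lborel. t > 0 \<longrightarrow> 0 \<le> f t" for f
  proof -
    have "0 \<le> B k f" for k
    proof -
      have "0 \<le> (LINT s:{a k<..b k}|lborel. f s / s)"
        unfolding set_lebesgue_integral_def
      proof (rule integral_nonneg_AE)
        show "AE x in lborel. 0 \<le> indicator {a k<..b k} x *\<^sub>R (f x / x)"
          using fP(2)
        proof (rule eventually_mono)
          fix x assume h: "0 < x \<longrightarrow> 0 \<le> f x"
          show "0 \<le> indicator {a k<..b k} x *\<^sub>R (f x / x)"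
          proof (cases "x \<in> {a k<..b k}")
            case True
            then have "x > 0" using pos[of k] by auto
            then show ?thesis using h True by simp
          qed simp
        qed
      qed
      then show ?thesis using L[of k] by (simp add: B_def Bw_def)
    qed
    then show ?thesis using tendsto_lowerbound[OF tend[OF fP(1)] _ U(1)] by simp
  qed
  have van: "\<omega> f = 0" if fV: "f \<in> Linf" "(f \<longlongrightarrow> 0) at_top" for f
  proof -
    have "((\<lambda>k. B k f) \<longlongrightarrow> 0) sequentially"
    proof (rule tendstoI)
      fix e :: real assume "e > 0"
      then have "eventually (\<lambda>t. dist (f t) 0 < e / 2) at_top" using fV(2) by (intro tendstoD) auto
      then obtain S where S: "\<And>t. t \<ge> S \<Longrightarrow> \<bar>f t\<bar> < e / 2" by (auto simp: eventually_at_top_linorder)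
      have "eventually (\<lambda>k. a k \<ge> S) sequentially" using ainf by (simp add: filterlim_at_top)
      then have "eventually (\<lambda>k. \<bar>B k f\<bar> \<le> e / 2) sequentially"
      proof (rule eventually_mono)
        fix k assume ak: "a k \<ge> S"
        show "\<bar>B k f\<bar> \<le> e / 2"
        proof (rule bw_bound)
          show "AE s in lborel. s \<in> {a k<..b k} \<longrightarrow> \<bar>f s\<bar> \<le> e / 2"
          proof (rule AE_I2, rule impI)
            fix s assume "s \<in> {a k<..b k}"
            then have "s \<ge> S" using ak by auto
            then show "\<bar>f s\<bar> \<le> e / 2" using S by (simp add: less_imp_le)
          qed
          show "set_integrable lborel {a k<..b k} (\<lambda>s. f s / s)" using win_integrable[OF fV(1) pos] .
        qed
      qed
      then show "eventually (\<lambda>k. dist (B k f) 0 < e) sequentially"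
        by (rule eventually_mono) (use \<open>e > 0\<close> in auto)
    qed
    then show ?thesis using tendsto_unique[OF U(1) tend[OF fV(1)] seqU] by simp
  qed
  have dil: "\<omega> (\<lambda>t. f (t / real n)) = \<omega> f" if fL: "f \<in> Linf" and n: "n \<ge> 1" for f n
  proof -
    obtain C where C: "C \<ge> 0" "AE t in lborel. t > 0 \<longrightarrow> \<bar>f t\<bar> \<le> C" using Linf_bound[OF fL] by blast
    define c where "c = real n"
    have c: "c \<ge> 1" using n by (simp add: c_def)
    define I where "I x y = (LINT s:{x<..y}|lborel. f s / s)" for x y
    have dk: "\<bar>B k (\<lambda>t. f (t / real n)) - B k f\<bar> \<le> 2 * C * ln c / (ln (b k) - ln (a k))" for k
    proof -
      let ?p = "a k" and ?q = "b k"
      have p: "0 < ?p" "?p < ?q" using pos ab by auto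
      have e1: "(LINT s:{?p<..?q}|lborel. f (s / c) / s) = I (?p/c) (?q/c)"
        unfolding I_def by (rule win_dilate) (use c in simp)
      have pc: "0 < ?p / c" "?p / c \<le> ?q / c" "?q / c \<le> ?q" "?p / c \<le> ?p"
        using p c by (auto simp: field_simps)
      have s1: "I (?p/c) (?q/c) + I (?q/c) ?q = I (?p/c) ?q"
        unfolding I_def by (rule win_add[OF fL pc(1) pc(2) pc(3)])
      have s2: "I (?p/c) ?p + I ?p ?q = I (?p/c) ?q"
        unfolding I_def by (rule win_add[OF fL pc(1) pc(4)]) (use p in simp)
      have lnc: "ln ?p - ln (?p / c) = ln c" "ln ?q - ln (?q / c) = ln c"
        using p c by (simp_all add: ln_div)
      have b1: "\<bar>I (?p/c) ?p\<bar> \<le> C * ln c"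
        using win_bound_Linf[OF fL C(2) pc(1) pc(4)] lnc by (simp add: I_def)
      have b2: "\<bar>I (?q/c) ?q\<bar> \<le> C * ln c"
        using win_bound_Linf[OF fL C(2) _ pc(3)] pc lnc by (simp add: I_def)
      have "B k (\<lambda>t. f (t / real n)) - B k f = (I (?p/c) ?p - I (?q/c) ?q) / (ln ?q - ln ?p)"
        using e1 s1 s2 by (simp add: B_def Bw_def c_def I_def diff_divide_distrib[symmetric])
      moreover have "\<bar>I (?p/c) ?p - I (?q/c) ?q\<bar> \<le> 2 * C * ln c" using b1 b2 by linarith
      ultimately show ?thesis using L[of k] by (simp add: abs_divide divide_right_mono)
    qed
    have "((\<lambda>k. 2 * C * ln c / (ln (b k) - ln (a k))) \<longlongrightarrow> 0) sequentially"
      by (rule tendsto_divide_0[OF tendsto_const filterlim_at_top_imp_at_infinity[OF Linf']])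
    then have "((\<lambda>k. B k (\<lambda>t. f (t / real n)) - B k f) \<longlongrightarrow> 0) sequentially"
      by (rule Lim_null_comparison[rotated]) (use dk in simp)
    then have "((\<lambda>k. B k f + (B k (\<lambda>t. f (t / real n)) - B k f)) \<longlongrightarrow> \<omega> f + 0) U"
      by (intro tendsto_add tend[OF fL] seqU)
    then show ?thesis unfolding \<omega>_def by (intro lim_eq) simp
  qed
  have fin: "\<omega> f + d \<le> \<omega> g" if fg: "f \<in> Linf" "g \<in> Linf" "\<forall>k. B k f + d \<le> B k g" for f g d
    using tendsto_le[OF U(1) tend[OF fg(2)] tendsto_add[OF tend[OF fg(1)] tendsto_const[of d]]] fg(3) by simp
  have "generalised_limit \<omega>"
    unfolding generalised_limit_def using one add scal posi van by blast
  moreover have "dilation_invariant \<omega>"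
    unfolding dilation_invariant_def using dil by blast
  ultimately show ?thesis using fin unfolding B_def by blast
qed


definition cc :: "nat \<Rightarrow> real" where "cc k = 4 * 2 ^ k"
definition sk :: "nat \<Rightarrow> real" where "sk k = cc k * exp (cc k)"
definition kk :: "real \<Rightarrow> nat" where "kk s = (LEAST k. s \<le> sk k)"
definition KK :: "real \<Rightarrow> nat" where "KK t = (LEAST k. t < sk k)"
definition xf :: "real \<Rightarrow> real" where "xf s = exp (- cc (kk s))"
definition yv :: "real \<Rightarrow> real" where "yv t = exp (- cc (KK t))"

lemma cc_pos: "cc k \<ge> 4" by (simp add: cc_def)
lemma cc_Suc: "cc (Suc k) = 2 * cc k" by (simp add: cc_def)
lemma cc_ge: "cc k \<ge> real k"
proof -
  have "real k \<le> 2 ^ k"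
  proof (induction k)
    case (Suc k)
    have "(1::real) \<le> 2 ^ k" by simp
    moreover have "real (Suc k) = 1 + real k" "(2::real) ^ Suc k = 2 * 2 ^ k" by simp_all
    ultimately show ?case using Suc.IH by linarith
  qed simp
  moreover have "(0::real) \<le> 2 ^ k" by simp
  ultimately show ?thesis unfolding cc_def by linarith
qed
lemma cc_mono: "j \<le> k \<Longrightarrow> cc j \<le> cc k" by (simp add: cc_def)
lemma cc_strict: "j < k \<Longrightarrow> cc j < cc k" by (simp add: cc_def)
lemma cc_less_iff: "cc j < cc k \<longleftrightarrow> j < k" by (simp add: cc_def)
lemma cc_le_iff: "cc j \<le> cc k \<longleftrightarrow> j \<le> k" by (simp add: cc_def)

lemma sk_pos: "sk k > 0" using cc_pos[of k] by (simp add: sk_def)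
lemma sk_ge_exp: "sk k \<ge> exp (cc k)" using cc_pos[of k] by (simp add: sk_def)
lemma sk_ge: "sk k \<ge> real k"
proof -
  have "real k \<le> cc k" by (rule cc_ge)
  also have "\<dots> \<le> exp (cc k)" by (smt (verit) exp_ge_add_one_self)
  also have "\<dots> \<le> sk k" by (rule sk_ge_exp)
  finally show ?thesis .
qed
lemma sk_strict: "j < k \<Longrightarrow> sk j < sk k"
  unfolding sk_def using cc_strict[of j k] cc_pos[of j]
  by (intro mult_strict_mono) auto
lemma sk_mono: "j \<le> k \<Longrightarrow> sk j \<le> sk k"
  using sk_strict[of j k] by (cases "j = k") auto
lemma sk_le_iff: "sk j \<le> sk k \<longleftrightarrow> j \<le> k"
  using sk_strict[of k j] sk_mono[of j k] by (meson not_le)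

lemma ex_sk: "\<exists>k. t < sk k"
proof -
  have "t < real (nat \<lceil>t\<rceil> + 1)" by linarith
  also have "\<dots> \<le> sk (nat \<lceil>t\<rceil> + 1)" by (rule sk_ge)
  finally show ?thesis by blast
qed

lemma kk_le_iff: "kk s \<le> m \<longleftrightarrow> s \<le> sk m"
proof
  obtain k where "s < sk k" using ex_sk by blast
  then have "s \<le> sk k" by simp
  then have ex: "s \<le> sk (kk s)" unfolding kk_def by (rule LeastI)
  assume "kk s \<le> m"
  then show "s \<le> sk m" using ex sk_mono[of "kk s" m] by linarith
next
  assume "s \<le> sk m" then show "kk s \<le> m" unfolding kk_def by (rule Least_le)
qed

lemma KK_le_iff: "KK s \<le> m \<longleftrightarrow> s < sk m"
proof
  obtain k where "s < sk k" using ex_sk by blast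
  then have ex: "s < sk (KK s)" unfolding KK_def by (rule LeastI)
  assume "KK s \<le> m"
  then show "s < sk m" using ex sk_mono[of "KK s" m] by linarith
next
  assume "s < sk m" then show "KK s \<le> m" unfolding KK_def by (rule Least_le)
qed

lemma xf_pos: "xf s > 0" by (simp add: xf_def)
lemma xf_le1: "xf s \<le> 1" using cc_pos[of "kk s"] by (simp add: xf_def)
lemma yv_pos: "yv s > 0" by (simp add: yv_def)
lemma yv_le1: "yv s \<le> 1" using cc_pos[of "KK s"] by (simp add: yv_def)

lemma xf_gt_iff: "xf s > exp (- cc m) \<longleftrightarrow> kk s < m"
  by (simp add: xf_def cc_less_iff)
lemma xf_ge_iff: "xf s \<ge> exp (- cc m) \<longleftrightarrow> kk s \<le> m"
  by (simp add: xf_def cc_le_iff)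

lemma kk_mono: "s \<le> s' \<Longrightarrow> kk s \<le> kk s'"
  using kk_le_iff[of s "kk s'"] kk_le_iff[of s' "kk s'"] by simp
lemma KK_mono: "s \<le> s' \<Longrightarrow> KK s \<le> KK s'"
  using KK_le_iff[of s "KK s'"] KK_le_iff[of s' "KK s'"] by simp

lemma xf_antimono: "s \<le> s' \<Longrightarrow> xf s' \<le> xf s"
  using kk_mono[of s s'] by (simp add: xf_def cc_le_iff)
lemma yv_antimono: "s \<le> s' \<Longrightarrow> yv s' \<le> yv s"
  using KK_mono[of s s'] by (simp add: yv_def cc_le_iff)

lemma xf_meas: "xf \<in> borel_measurable borel"
proof -
  have "mono (\<lambda>s. - xf s)" by (auto simp: mono_def intro: xf_antimono)
  then have "(\<lambda>s. - xf s) \<in> borel_measurable borel" by (rule borel_measurable_mono)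
  then have "(\<lambda>s. - (- xf s)) \<in> borel_measurable borel" by measurable
  then show ?thesis by simp
qed
lemma yv_meas: "yv \<in> borel_measurable borel"
proof -
  have "mono (\<lambda>s. - yv s)" by (auto simp: mono_def intro: yv_antimono)
  then have "(\<lambda>s. - yv s) \<in> borel_measurable borel" by (rule borel_measurable_mono)
  then have "(\<lambda>s. - (- yv s)) \<in> borel_measurable borel" by measurable
  then show ?thesis by simp
qed

lemma set_kk_le: "{s \<in> {0<..}. kk s \<le> m} = {0<..sk m}"
  using kk_le_iff by auto

lemma distrib_upper:
  assumes "exp (- cc (Suc m)) \<le> l"
  shows "distrib_fun xf l \<le> ennreal (sk m)"
proof -
  have "{s \<in> {0<..}. \<bar>xf s\<bar> > l} \<subseteq> {0<..sk m}"
  proof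
    fix s assume "s \<in> {s \<in> {0<..}. \<bar>xf s\<bar> > l}"
    then have "s > 0" "xf s > exp (- cc (Suc m))" using assms xf_pos[of s] by auto
    then show "s \<in> {0<..sk m}" using xf_gt_iff kk_le_iff by (simp add: less_Suc_eq_le)
  qed
  then have "distrib_fun xf l \<le> emeasure lborel {0<..sk m}"
    unfolding distrib_fun_def by (intro emeasure_mono) auto
  then show ?thesis using sk_pos[of m] by simp
qed

lemma distrib_lower:
  assumes "l < exp (- cc m)"
  shows "ennreal (sk m) \<le> distrib_fun xf l"
proof -
  have "{0<..sk m} \<subseteq> {s \<in> {0<..}. \<bar>xf s\<bar> > l}"
  proof
    fix s assume s: "s \<in> {0<..sk m}"
    then have "xf s \<ge> exp (- cc m)" using xf_ge_iff kk_le_iff by auto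
    then show "s \<in> {s \<in> {0<..}. \<bar>xf s\<bar> > l}" using s assms xf_pos[of s] by auto
  qed
  moreover have "{s \<in> {0<..}. \<bar>xf s\<bar> > l} \<in> sets lborel"
    using xf_meas by measurable
  ultimately have "emeasure lborel {0<..sk m} \<le> distrib_fun xf l"
    unfolding distrib_fun_def by (intro emeasure_mono)
  then show ?thesis using sk_pos[of m] by simp
qed

lemma distrib_le_iff:
  assumes "0 \<le> l" "0 \<le> t"
  shows "distrib_fun xf l \<le> ennreal t \<longleftrightarrow> yv t \<le> l"
proof
  assume h: "distrib_fun xf l \<le> ennreal t"
  show "yv t \<le> l"
  proof (rule ccontr)
    assume "\<not> yv t \<le> l"
    then have "l < exp (- cc (KK t))" by (simp add: yv_def)
    then have "ennreal (sk (KK t)) \<le> distrib_fun xf l" by (rule distrib_lower)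
    then have "ennreal (sk (KK t)) \<le> ennreal t" using h by simp
    then have "sk (KK t) \<le> t" using assms by (simp add: ennreal_le_iff)
    moreover have "t < sk (KK t)" using KK_le_iff[of t "KK t"] by simp
    ultimately show False by simp
  qed
next
  assume h: "yv t \<le> l"
  show "distrib_fun xf l \<le> ennreal t"
  proof (cases "KK t")
    case 0
    have "{s \<in> {0<..}. \<bar>xf s\<bar> > l} = {}"
    proof -
      have "xf s \<le> l" for s
      proof -
        have e1: "exp (- cc (kk s)) \<le> exp (- cc 0)" using cc_mono[of 0 "kk s"] by simp
        have e2: "exp (- cc 0) \<le> l" using h 0 by (simp add: yv_def)
        show ?thesis unfolding xf_def using e1 e2 by linarith
      qed
      then show ?thesis using xf_pos by (metis (no_types, lifting) abs_of_pos empty_Collect_eq leD)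
    qed
    then show ?thesis unfolding distrib_fun_def by (simp only:) simp
  next
    case (Suc m)
    have "exp (- cc (Suc m)) \<le> l" using h Suc by (simp add: yv_def)
    then have "distrib_fun xf l \<le> ennreal (sk m)" by (rule distrib_upper)
    moreover have "sk m \<le> t" using KK_le_iff[of t m] Suc by simp
    ultimately show ?thesis by (meson ennreal_leI order_trans)
  qed
qed

lemma rearr_eq: "0 \<le> t \<Longrightarrow> rearr xf t = yv t"
proof -
  assume t: "0 \<le> t"
  have "{l::real. 0 \<le> l \<and> distrib_fun xf l \<le> ennreal t} = {yv t..}"
    using distrib_le_iff[OF _ t] yv_pos[of t] by force
  then show ?thesis by (simp add: rearr_def)
qed



lemma yv_setint:
  assumes "A \<in> sets borel" "A \<subseteq> {u..v}"
  shows "set_integrable lborel A yv"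
proof -
  have "emeasure lborel A \<le> emeasure lborel {u..v}" using assms by (intro emeasure_mono) auto
  also have "\<dots> < \<infinity>" by (simp add: emeasure_lborel_Icc_eq)
  finally have "integrable lborel (indicator A :: real \<Rightarrow> real)"
    using assms by (simp add: integrable_indicator_iff)
  moreover have "(\<lambda>s. indicator A s *\<^sub>R yv s) \<in> borel_measurable lborel"
    using yv_meas assms(1) by measurable
  moreover have "AE s in lborel. norm (indicator A s *\<^sub>R yv s) \<le> norm (indicator A s :: real)"
    by (rule AE_I2) (use yv_pos yv_le1 in \<open>auto simp: indicator_def less_imp_le\<close>)
  ultimately show ?thesis unfolding set_integrable_def by (rule Bochner_Integration.integrable_bound)
qed

lemma yv_int_nonneg: "0 \<le> (LINT s:A|lborel. yv s)"
  unfolding set_lebesgue_integral_def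
  by (rule integral_nonneg_AE, rule AE_I2) (use yv_pos in \<open>auto simp: indicator_def less_imp_le\<close>)

lemma const_int: "u \<le> v \<Longrightarrow> (LINT s:{u<..v}|lborel. (c::real)) = c * (v - u)"
  by (subst set_integral_const) auto

definition G :: "real \<Rightarrow> real" where "G t = (LINT s:{0<..t}|lborel. yv s)"

lemma G_split:
  assumes "0 \<le> u" "u \<le> v"
  shows "G v = G u + (LINT s:{u<..v}|lborel. yv s)"
proof -
  have "{0<..v} = {0<..u} \<union> {u<..v}" using assms by auto
  moreover have "{0<..u} \<inter> {u<..v} = {}" by auto
  moreover have "set_integrable lborel {0<..u} yv" by (rule yv_setint[of _ 0 u]) auto
  moreover have "set_integrable lborel {u<..v} yv" by (rule yv_setint[of _ u v]) auto
  ultimately show ?thesis unfolding G_def by (simp add: set_integral_Un)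
qed

lemma G_nonneg: "0 \<le> G t" unfolding G_def by (rule yv_int_nonneg)

lemma G_neg: "t \<le> 0 \<Longrightarrow> G t = 0" unfolding G_def by (simp add: set_lebesgue_integral_def)

lemma G_mono: "mono G"
proof (rule monoI)
  fix u v :: real assume uv: "u \<le> v"
  show "G u \<le> G v"
  proof (cases "u \<le> 0")
    case True then show ?thesis using G_neg G_nonneg by simp
  next
    case False
    then show ?thesis using G_split[of u v] uv yv_int_nonneg[of "{u<..v}"] by simp
  qed
qed

lemma G_meas: "G \<in> borel_measurable borel"
  using G_mono by (rule borel_measurable_mono)

lemma int_upper:
  assumes "u \<le> v" "\<And>s. s \<in> {u<..v} \<Longrightarrow> yv s \<le> c"
  shows "(LINT s:{u<..v}|lborel. yv s) \<le> c * (v - u)"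
proof -
  have "(LINT s:{u<..v}|lborel. yv s) \<le> (LINT s:{u<..v}|lborel. c)"
  proof (rule set_integral_mono)
    show "set_integrable lborel {u<..v} yv" by (rule yv_setint[of _ u v]) auto
    show "set_integrable lborel {u<..v} (\<lambda>s. c)"
      unfolding set_integrable_def using assms(1)
      by (intro integrable_scaleR_left) (simp add: integrable_indicator_iff)
  qed (use assms in auto)
  then show ?thesis using const_int[OF assms(1)] by simp
qed

lemma int_lower:
  assumes "u \<le> v" "\<And>s. s \<in> {u<..<v} \<Longrightarrow> c \<le> yv s"
  shows "c * (v - u) \<le> (LINT s:{u<..v}|lborel. yv s)"
proof -
  have "(LINT s:{u<..v}|lborel. c) \<le> (LINT s:{u<..v}|lborel. yv s)"
  proof (rule set_integral_mono_AE)
    show "set_integrable lborel {u<..v} yv" by (rule yv_setint[of _ u v]) auto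
    show "set_integrable lborel {u<..v} (\<lambda>s. c)"
      unfolding set_integrable_def using assms(1)
      by (intro integrable_scaleR_left) (simp add: integrable_indicator_iff)
    show "AE s\<in>{u<..v} in lborel. c \<le> yv s"
      using AE_lborel_singleton[of v]
      by (rule eventually_mono) (use assms in auto)
  qed
  then show ?thesis using const_int[OF assms(1)] by simp
qed

lemma yv_le: "s > sk j \<Longrightarrow> yv s \<le> exp (- cc (Suc j))"
proof -
  assume "s > sk j"
  then have "\<not> KK s \<le> j" using KK_le_iff by simp
  then have "Suc j \<le> KK s" by simp
  then show ?thesis unfolding yv_def using cc_mono by simp
qed

lemma yv_le0: "yv s \<le> exp (- cc 0)"
  unfolding yv_def using cc_mono[of 0 "KK s"] by simp

lemma yv_ge: "s < sk m \<Longrightarrow> exp (- cc m) \<le> yv s"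
proof -
  assume "s < sk m"
  then have "KK s \<le> m" using KK_le_iff by simp
  then show ?thesis unfolding yv_def using cc_mono by simp
qed

lemma expsk: "exp (- cc k) * sk k = cc k"
  by (simp add: sk_def exp_minus field_simps)

lemma G_sk: "G (sk m) \<le> 2 * cc m - 4"
proof (induction m)
  case 0
  have "G (sk 0) = G 0 + (LINT s:{0<..sk 0}|lborel. yv s)"
    using sk_pos[of 0] by (intro G_split) auto
  also have "\<dots> \<le> 0 + exp (- cc 0) * (sk 0 - 0)"
    using G_neg[of 0] int_upper[of 0 "sk 0" "exp (- cc 0)"] sk_pos[of 0] yv_le0 by simp
  also have "\<dots> = cc 0" using expsk[of 0] by simp
  finally show ?case by (simp add: cc_def)
next
  case (Suc m)
  have "G (sk (Suc m)) = G (sk m) + (LINT s:{sk m<..sk (Suc m)}|lborel. yv s)"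
    using sk_pos[of m] sk_mono[of m "Suc m"] by (intro G_split) auto
  also have "\<dots> \<le> (2 * cc m - 4) + exp (- cc (Suc m)) * (sk (Suc m) - sk m)"
  proof -
    have "(LINT s:{sk m<..sk (Suc m)}|lborel. yv s) \<le> exp (- cc (Suc m)) * (sk (Suc m) - sk m)"
    proof (rule int_upper)
      show "sk m \<le> sk (Suc m)" by (rule sk_mono) simp
      fix s assume "s \<in> {sk m<..sk (Suc m)}"
      then show "yv s \<le> exp (- cc (Suc m))" using yv_le[of m s] by simp
    qed
    then show ?thesis using Suc.IH by linarith
  qed
  also have "\<dots> \<le> (2 * cc m - 4) + cc (Suc m)"
    using expsk[of "Suc m"] sk_pos[of m] by (simp add: right_diff_distrib)
  also have "\<dots> = 2 * cc (Suc m) - 4" by (simp add: cc_Suc)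
  finally show ?case .
qed

lemma ln_ge1: "exp 1 \<le> (t::real) \<Longrightarrow> 1 \<le> ln t"
proof -
  assume t: "exp 1 \<le> t"
  have "0 < exp (1::real)" by simp
  then have tp: "0 < t" using t by linarith
  have "ln (exp 1) \<le> ln t" using t tp by (subst ln_le_cancel_iff) auto
  then show ?thesis by simp
qed

lemma G_bound: "exp 1 \<le> t \<Longrightarrow> G t \<le> 4 * ln t"
proof -
  assume t: "exp 1 \<le> t"
  have "0 < exp (1::real)" by simp
  then have tp: "t > 0" using t by linarith
  define m where "m = kk t"
  have "t \<le> sk m" using kk_le_iff[of t m] by (simp add: m_def)
  then have "G t \<le> G (sk m)" using G_mono by (simp add: mono_def)
  also have "\<dots> \<le> 2 * cc m - 4" by (rule G_sk)
  finally have Gt: "G t \<le> 2 * cc m - 4" .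
  show ?thesis
  proof (cases m)
    case 0
    then show ?thesis using Gt ln_ge1[OF t] by (simp add: cc_def)
  next
    case (Suc j)
    then have "\<not> kk t \<le> j" by (simp add: m_def)
    then have "sk j < t" using kk_le_iff by simp
    then have "exp (cc j) < t" using sk_ge_exp[of j] by simp
    then have "ln (exp (cc j)) < ln t" using tp by (subst ln_less_cancel_iff) auto
    then have "cc j < ln t" by simp
    then show ?thesis using Gt Suc by (simp add: cc_Suc)
  qed
qed

lemma rearr_int: "0 \<le> t \<Longrightarrow> (LBINT s=0..t. rearr xf s) = G t"
proof -
  assume t: "0 \<le> t"
  have "(LBINT s=ereal 0..ereal t. rearr xf s) = (LINT s:{0<..t}|lborel. rearr xf s)"
    by (rule interval_integral_Ioc) (use t in simp)
  also have "\<dots> = G t" unfolding G_def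
    by (rule set_lebesgue_integral_cong) (auto simp: rearr_eq)
  finally show ?thesis by (simp add: zero_ereal_def)
qed



lemma d_exists: "l > 0 \<Longrightarrow> \<exists>m. exp (- cc (Suc m)) \<le> l"
proof -
  assume l: "l > 0"
  define m where "m = nat \<lceil>- ln l\<rceil>"
  have "- ln l \<le> real m" unfolding m_def by linarith
  also have "\<dots> \<le> cc (Suc m)" using cc_ge[of "Suc m"] by simp
  finally have "exp (- cc (Suc m)) \<le> exp (ln l)" by simp
  then show ?thesis using l by (intro exI[of _ m]) simp
qed

lemma d_bound:
  assumes "l > 0"
  shows "\<exists>m. distrib_fun xf l \<le> ennreal (sk m) \<and> (m = 0 \<or> l < exp (- cc m))"
proof -
  define m where "m = (LEAST m. exp (- cc (Suc m)) \<le> l)"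
  obtain m0 where m0: "exp (- cc (Suc m0)) \<le> l" using d_exists[OF assms] by blast
  have "exp (- cc (Suc m)) \<le> l" unfolding m_def using m0 by (rule LeastI)
  then have "distrib_fun xf l \<le> ennreal (sk m)" by (rule distrib_upper)
  moreover have "m = 0 \<or> l < exp (- cc m)"
  proof (cases m)
    case (Suc j)
    have "\<not> exp (- cc (Suc j)) \<le> l"
      using not_less_Least[of j "\<lambda>m. exp (- cc (Suc m)) \<le> l"] Suc unfolding m_def by simp
    then show ?thesis using Suc by simp
  qed simp
  ultimately show ?thesis by blast
qed

lemma d_fin: "l > 0 \<Longrightarrow> distrib_fun xf l < \<infinity>"
proof -
  assume "l > 0"
  then obtain m where "distrib_fun xf l \<le> ennreal (sk m)" using d_bound by blast
  then show ?thesis by (rule le_less_trans) simp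
qed

lemma dix_eq: "dix_fun xf t = (if exp 1 \<le> t then G t / ln t else 0)"
proof (cases "exp 1 \<le> t")
  case True
  have "0 < exp (1::real)" by simp
  then have "0 \<le> t" using True by linarith
  then show ?thesis using True by (simp add: dix_fun_def rearr_int)
qed (simp add: dix_fun_def)

lemma stj_eq: "exp 1 \<le> t \<Longrightarrow> stieltjes_fun xf t = G (enn2real (distrib_fun xf (1 / t))) / ln t"
  by (simp add: stieltjes_fun_def rearr_int)

lemma exp1_pos: "exp 1 \<le> t \<Longrightarrow> 0 < (t::real)"
proof -
  assume "exp 1 \<le> t"
  moreover have "0 < exp (1::real)" by simp
  ultimately show ?thesis by linarith
qed

lemma ln_pos': "exp 1 \<le> t \<Longrightarrow> 0 < ln (t::real)"
  using ln_ge1[of t] by simp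

lemma stj_num_bound:
  assumes t: "exp 1 \<le> t"
  shows "G (enn2real (distrib_fun xf (1 / t))) \<le> 4 * ln t"
proof -
  have tp: "t > 0" using exp1_pos[OF t] .
  obtain m where m: "distrib_fun xf (1/t) \<le> ennreal (sk m)" "m = 0 \<or> 1/t < exp (- cc m)"
    using d_bound[of "1/t"] tp by auto
  have "enn2real (distrib_fun xf (1/t)) \<le> enn2real (ennreal (sk m))"
    using m(1) by (rule enn2real_mono) simp
  then have "enn2real (distrib_fun xf (1/t)) \<le> sk m" using sk_pos[of m] by simp
  then have "G (enn2real (distrib_fun xf (1/t))) \<le> G (sk m)" using G_mono by (simp add: mono_def)
  also have "\<dots> \<le> 2 * cc m - 4" by (rule G_sk)
  finally have g: "G (enn2real (distrib_fun xf (1/t))) \<le> 2 * cc m - 4" .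
  show ?thesis
  proof (cases "m = 0")
    case True
    then show ?thesis using g ln_ge1[OF t] by (simp add: cc_def)
  next
    case False
    then have "1/t < exp (- cc m)" using m(2) by simp
    then have "exp (cc m) < t" using tp by (simp add: exp_minus field_simps)
    then have "ln (exp (cc m)) < ln t" using tp by (subst ln_less_cancel_iff) auto
    then have "cc m < ln t" by simp
    then show ?thesis using g ln_pos'[OF t] by linarith
  qed
qed

definition hf :: "real \<Rightarrow> real" where
  "hf t = enn2real (distrib_fun xf (1 / max (exp 1) t))"

lemma distrib_sets: "{s \<in> {0<..}. \<bar>xf s\<bar> > l} \<in> sets lborel"
  using xf_meas by measurable

lemma hf_mono: "mono hf"
proof (rule monoI)
  fix t t' :: real assume tt: "t \<le> t'"
  let ?T = "max (exp 1) t" and ?T' = "max (exp 1) t'"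
  have T: "0 < ?T" "?T \<le> ?T'" using tt exp1_pos[of ?T] by auto
  then have "1 / ?T' \<le> 1 / ?T" by (simp add: frac_le)
  then have "{s \<in> {0<..}. \<bar>xf s\<bar> > 1 / ?T} \<subseteq> {s \<in> {0<..}. \<bar>xf s\<bar> > 1 / ?T'}" by auto
  then have "distrib_fun xf (1 / ?T) \<le> distrib_fun xf (1 / ?T')"
    unfolding distrib_fun_def by (intro emeasure_mono distrib_sets)
  moreover have "distrib_fun xf (1 / ?T') < \<infinity>" using T by (intro d_fin) simp
  ultimately show "hf t \<le> hf t'" unfolding hf_def by (intro enn2real_mono) auto
qed

lemma Ghf_meas: "(\<lambda>t. G (hf t)) \<in> borel_measurable borel"
proof -
  have "mono (\<lambda>t. G (hf t))" using G_mono hf_mono by (simp add: mono_def)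
  then show ?thesis by (rule borel_measurable_mono)
qed

lemma stj_eq2: "stieltjes_fun xf = (\<lambda>t. if exp 1 \<le> t then G (hf t) / ln t else 0)"
proof
  fix t show "stieltjes_fun xf t = (if exp 1 \<le> t then G (hf t) / ln t else 0)"
  proof (cases "exp 1 \<le> t")
    case True
    then show ?thesis by (simp add: stj_eq hf_def max_absorb2)
  next
    case False
    then show ?thesis by (simp add: stieltjes_fun_def)
  qed
qed

lemma Linf_I:
  assumes "f \<in> borel_measurable borel" "\<And>t. \<bar>f t\<bar> \<le> C"
  shows "f \<in> Linf"
  unfolding Linf_def using assms
  by (auto intro!: measurable_restrict_space1 AE_I2)

lemma dix_Linf: "dix_fun xf \<in> Linf"
proof (rule Linf_I)
  have [measurable]: "G \<in> borel_measurable borel" by (rule G_meas)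
  have "(\<lambda>t. if exp 1 \<le> t then G t / ln t else 0) \<in> borel_measurable borel" by measurable
  then show "dix_fun xf \<in> borel_measurable borel" by (simp add: dix_eq[abs_def])
  fix t show "\<bar>dix_fun xf t\<bar> \<le> 4"
  proof (cases "exp 1 \<le> t")
    case True
    then have "G t / ln t \<le> 4" using G_bound[OF True] ln_pos'[OF True] by (simp add: divide_le_eq)
    moreover have "0 \<le> G t / ln t" using G_nonneg ln_pos'[OF True] by simp
    ultimately show ?thesis using True by (simp add: dix_eq)
  qed (simp add: dix_eq)
qed

lemma stj_Linf: "stieltjes_fun xf \<in> Linf"
proof (rule Linf_I)
  have [measurable]: "(\<lambda>t. G (hf t)) \<in> borel_measurable borel" by (rule Ghf_meas)
  have "(\<lambda>t. if exp 1 \<le> t then G (hf t) / ln t else 0) \<in> borel_measurable borel" by measurable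
  then show "stieltjes_fun xf \<in> borel_measurable borel" by (simp add: stj_eq2)
  fix t show "\<bar>stieltjes_fun xf t\<bar> \<le> 4"
  proof (cases "exp 1 \<le> t")
    case True
    let ?g = "G (enn2real (distrib_fun xf (1 / t)))"
    have "?g / ln t \<le> 4" using stj_num_bound[OF True] ln_pos'[OF True] by (simp add: divide_le_eq)
    moreover have "0 \<le> ?g / ln t" using G_nonneg ln_pos'[OF True] by simp
    ultimately show ?thesis using True by (simp add: stj_eq)
  qed (simp add: stieltjes_fun_def)
qed

lemma xf_M1inf: "xf \<in> M1inf"
proof -
  have "xf \<in> bdd_meas"
    unfolding bdd_meas_def using xf_meas xf_pos xf_le1
    by (auto intro!: measurable_restrict_space1 exI[of _ 1] simp: less_imp_le)
  moreover have "\<forall>t\<ge>exp 1. (LBINT s=0..t. rearr xf s) / ln t \<le> 4"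
  proof (intro allI impI)
    fix t :: real assume t: "exp 1 \<le> t"
    then have "0 \<le> t" using exp1_pos by (simp add: less_imp_le)
    then show "(LBINT s=0..t. rearr xf s) / ln t \<le> 4"
      using G_bound[OF t] ln_pos'[OF t] by (simp add: rearr_int divide_le_eq)
  qed
  ultimately show ?thesis unfolding M1inf_def by blast
qed



definition wa :: "nat \<Rightarrow> real" where "wa k = exp (cc k)"
definition wb :: "nat \<Rightarrow> real" where "wb k = sk k / 2"

lemma cc_le_exp: "cc k \<le> exp (cc k)"
  using exp_ge_add_one_self[of "cc k"] by linarith

lemma wa_pos: "0 < wa k" by (simp add: wa_def)
lemma wab: "wa k < wb k"
  using cc_pos[of k] by (simp add: wa_def wb_def sk_def)

lemma wa_lim: "filterlim wa at_top sequentially"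
proof (rule filterlim_at_top_mono[OF filterlim_real_sequentially])
  have "real x \<le> wa x" for x using cc_ge[of x] cc_le_exp[of x] by (simp add: wa_def)
  then show "\<forall>\<^sub>F x in sequentially. real x \<le> wa x" by (simp add: always_eventually)
qed

lemma wL_eq: "ln (wb k) - ln (wa k) = ln (2 * 2 ^ k)"
proof -
  have "ln (wb k) = ln (cc k / 2) + cc k"
    using cc_pos[of k] by (simp add: wb_def sk_def ln_mult ln_div)
  moreover have "cc k / 2 = 2 * 2 ^ k" by (simp add: cc_def)
  ultimately show ?thesis by (simp add: wa_def)
qed

lemma wL_lim: "filterlim (\<lambda>k. ln (wb k) - ln (wa k)) at_top sequentially"
proof -
  have "filterlim (\<lambda>k::nat. ln (2 * 2 ^ k :: real)) at_top sequentially" by real_asymp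
  then show ?thesis by (simp add: wL_eq)
qed

lemma win_distrib:
  assumes t: "wa k < t" "t \<le> wb k"
  shows "enn2real (distrib_fun xf (1 / t)) = sk k"
proof -
  have tp: "0 < t" using t wa_pos[of k] by linarith
  have "t \<le> sk k" using t(2) sk_pos[of k] by (simp add: wb_def)
  also have "\<dots> \<le> exp (cc k) * exp (cc k)" unfolding sk_def using cc_le_exp[of k] by simp
  also have "\<dots> = exp (cc k + cc k)" by (rule exp_add[symmetric])
  also have "\<dots> = exp (cc (Suc k))" by (simp add: cc_Suc)
  finally have "exp (- cc (Suc k)) \<le> 1 / t" using tp by (simp add: exp_minus field_simps)
  then have u: "distrib_fun xf (1/t) \<le> ennreal (sk k)" by (rule distrib_upper)
  have "1 / t < exp (- cc k)" using t(1) tp by (simp add: wa_def exp_minus field_simps)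
  then have "ennreal (sk k) \<le> distrib_fun xf (1/t)" by (rule distrib_lower)
  then have "distrib_fun xf (1/t) = ennreal (sk k)" using u by simp
  then show ?thesis using sk_pos[of k] by simp
qed

lemma win_diff:
  assumes t: "wa k < t" "t \<le> wb k"
  shows "dix_fun xf t + 1/4 \<le> stieltjes_fun xf t"
proof -
  have e1: "exp 1 \<le> t"
  proof -
    have "exp 1 \<le> wa k" using cc_pos[of k] by (simp add: wa_def)
    then show ?thesis using t by linarith
  qed
  have tp: "0 < t" using exp1_pos[OF e1] .
  have lt: "0 < ln t" using ln_pos'[OF e1] .
  have tsk: "t \<le> sk k" using t(2) sk_pos[of k] by (simp add: wb_def)
  have st: "stieltjes_fun xf t = G (sk k) / ln t" using stj_eq[OF e1] win_distrib[OF t] by simp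
  have dt: "dix_fun xf t = G t / ln t" using e1 by (simp add: dix_eq)
  have sp: "G (sk k) = G t + (LINT s:{t<..sk k}|lborel. yv s)"
    using tp tsk by (intro G_split) auto
  have "exp (- cc k) * (sk k - t) \<le> (LINT s:{t<..sk k}|lborel. yv s)"
    by (rule int_lower) (use tsk yv_ge in auto)
  moreover have "cc k / 2 \<le> exp (- cc k) * (sk k - t)"
  proof -
    have "exp (- cc k) * (sk k - t) \<ge> exp (- cc k) * (sk k / 2)"
      using t(2) by (intro mult_left_mono) (auto simp: wb_def)
    moreover have "exp (- cc k) * (sk k / 2) = cc k / 2" using expsk[of k] by simp
    ultimately show ?thesis by linarith
  qed
  ultimately have gd: "cc k / 2 \<le> G (sk k) - G t" using sp by simp
  have "ln t \<le> ln (sk k)" using tp tsk by simp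
  also have "\<dots> = ln (cc k) + cc k" using cc_pos[of k] by (simp add: sk_def ln_mult)
  also have "\<dots> \<le> 2 * cc k" using ln_le_minus_one[of "cc k"] cc_pos[of k] by simp
  finally have lnt: "ln t \<le> 2 * cc k" .
  have "1/4 \<le> (cc k / 2) / ln t"
    using lt lnt cc_pos[of k] by (simp add: field_simps)
  also have "\<dots> \<le> (G (sk k) - G t) / ln t"
    using gd lt by (intro divide_right_mono) auto
  finally have h: "1/4 \<le> (G (sk k) - G t) / ln t" .
  moreover have "(G (sk k) - G t) / ln t = G (sk k) / ln t - G t / ln t" by (rule diff_divide_distrib)
  ultimately show ?thesis using st dt by linarith
qed

lemma win_Bw:
  "Bw wa wb k (dix_fun xf) + 1/4 \<le> Bw wa wb k (stieltjes_fun xf)"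
proof -
  let ?A = "{wa k<..wb k}"
  let ?L = "ln (wb k) - ln (wa k)"
  have L: "0 < ?L" using wa_pos[of k] wab[of k] by simp
  have i1: "set_integrable lborel ?A (\<lambda>s. dix_fun xf s / s)" by (rule win_integrable[OF dix_Linf wa_pos])
  have i2: "set_integrable lborel ?A (\<lambda>s. stieltjes_fun xf s / s)" by (rule win_integrable[OF stj_Linf wa_pos])
  have i3: "set_integrable lborel ?A (\<lambda>s. 1/4 * (1 / s))"
    by (rule set_integrable_mult_right) (rule inv_set_integrable[OF wa_pos])
  have "(LINT s:?A|lborel. dix_fun xf s / s + 1/4 * (1 / s)) \<le> (LINT s:?A|lborel. stieltjes_fun xf s / s)"
  proof (rule set_integral_mono)
    show "set_integrable lborel ?A (\<lambda>s. dix_fun xf s / s + 1/4 * (1 / s))"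
      using i1 i3 by (rule set_integral_add(1))
    show "set_integrable lborel ?A (\<lambda>s. stieltjes_fun xf s / s)" by (rule i2)
    fix s assume s: "s \<in> ?A"
    then have sp: "0 < s" using wa_pos[of k] by auto
    have "dix_fun xf s + 1/4 \<le> stieltjes_fun xf s" using s by (intro win_diff) auto
    then have "(dix_fun xf s + 1/4) / s \<le> stieltjes_fun xf s / s" using sp by (simp add: divide_right_mono)
    then show "dix_fun xf s / s + 1/4 * (1 / s) \<le> stieltjes_fun xf s / s" by (simp add: add_divide_distrib)
  qed
  moreover have "(LINT s:?A|lborel. dix_fun xf s / s + 1/4 * (1 / s)) =
      (LINT s:?A|lborel. dix_fun xf s / s) + 1/4 * (LINT s:?A|lborel. 1 / s)"
    using set_integral_add[OF i1 i3] set_integral_mult_right[where a="1/4" and M=lborel and A="?A" and f="\<lambda>s. 1 / s"] by simp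
  moreover have "(LINT s:?A|lborel. 1 / s) = ?L"
    using inv_integral[OF wa_pos less_imp_le[OF wab]] .
  ultimately have "(LINT s:?A|lborel. dix_fun xf s / s) + ?L / 4 \<le> (LINT s:?A|lborel. stieltjes_fun xf s / s)"
    by simp
  then have "((LINT s:?A|lborel. dix_fun xf s / s) + ?L / 4) / ?L \<le> (LINT s:?A|lborel. stieltjes_fun xf s / s) / ?L"
    using L by (simp add: divide_right_mono)
  moreover have "((LINT s:?A|lborel. dix_fun xf s / s) + ?L / 4) / ?L = (LINT s:?A|lborel. dix_fun xf s / s) / ?L + 1/4"
    using L by (simp add: add_divide_distrib)
  ultimately show ?thesis unfolding Bw_def by linarith
qed

theorem theorem1p5:
  shows "\<exists>(x::real \<Rightarrow> real) (\<omega>::(real \<Rightarrow> real) \<Rightarrow> real).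
     (\<forall>s>0. 0 \<le> x s) \<and> x \<in> M1inf
   \<and> generalised_limit \<omega> \<and> dilation_invariant \<omega>
   \<and> dix_fun x \<in> Linf \<and> stieltjes_fun x \<in> Linf
   \<and> dixmier_trace \<omega> x \<noteq> \<omega> (stieltjes_fun x)"
proof -
  obtain \<omega> where \<omega>: "generalised_limit \<omega>" "dilation_invariant \<omega>"
    "\<forall>f\<in>Linf. \<forall>g\<in>Linf. \<forall>d>0. (\<forall>k. Bw wa wb k f + d \<le> Bw wa wb k g) \<longrightarrow> \<omega> f + d \<le> \<omega> g"
    using omega_exists[OF wa_pos wab wa_lim wL_lim] by blast
  have "\<omega> (dix_fun xf) + 1/4 \<le> \<omega> (stieltjes_fun xf)"
    using \<omega>(3) dix_Linf stj_Linf win_Bw by simp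
  then have "dixmier_trace \<omega> xf \<noteq> \<omega> (stieltjes_fun xf)" by (simp add: dixmier_trace_def)
  then show ?thesis
    using \<omega>(1,2) xf_M1inf dix_Linf stj_Linf xf_pos less_imp_le by blast
qed

end
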